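(* Let $k\ge3$, $d$ a positive integer, $\alpha=d/k$, $\beta>0$, $\lambda\in(0,1)$, and let $\eta_0$ be a probability measure on $[0,1]$ with $\eta_0(\mathrm dx)=\eta_0(\mathrm d(1-x))$. For any literals $\underline{\mathtt L}_a\in\{0,1\}^k$, $0\le a\le d$, the quantity $$\mathcal P\big(\delta_{\eta_0},\lambda;(\underline{\mathtt L}_a)_{0\le a\le d}\big):=\lambda^{-1}\log\mathbb E'\Big(\sum_{x\in\{0,1\}}\prod_{a=1}^d u_{a,\underline{\mathtt L}_a}(x)\Big)^{\lambda}-(k-1)\alpha\lambda^{-1}\log\mathbb E'\big(u_{\underline{\mathtt L}_0}\big)^{\lambda}$$ does not depend on $(\underline{\mathtt L}_a)_{0\le a\le d}$. Consequently, its average over $(\underline{\mathtt L}_a)_{0\le a\le d}$ i.i.d. uniform on $\{0,1\}^k$ equals its value at $\underline{\mathtt L}_a\equiv\underline 0$.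
   Context: Identify a probability measure $\rho$ on $\{0,1\}$ with $\rho(1)\in[0,1]$. Let $(\rho_{a,j})_{a\ge0,j\ge1}$ be i.i.d. samples from $\eta_0$, and $\mathbb E'$ the expectation over them. For $\underline{\mathtt L}\in\{0,1\}^k$ and $\underline x\in\{0,1\}^k$, $\theta_{\underline{\mathtt L}}(\underline x)=(1-e^{-\beta})\big(\prod_{i=1}^k(\mathtt L_i\oplus x_i)+\prod_{i=1}^k(\mathtt L_i\oplus x_i\oplus1)\big)$. For $x\in\{0,1\}$: $u_{a,\underline{\mathtt L}}(x)=\sum_{\underline x\in\{0,1\}^k}\mathbb 1\{x_1=x\}(1-\theta_{\underline{\mathtt L}}(\underline x))\prod_{j=2}^k\rho_{a,j}(x_j)$ and $u_{\underline{\mathtt L}}=\sum_{\underline x\in\{0,1\}^k}(1-\theta_{\underline{\mathtt L}}(\underline x))\prod_{j=1}^k\rho_{0,j}(x_j)$. *)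

theory Defs
  imports "HOL-Probability.Probability"
begin

text \<open>Binary values \{0,1\} are encoded as bool (False = 0, True = 1); xor is inequality.
  A sample r in [0,1] stands for the probability measure rho on \{0,1\} with rho(1) = r.\<close>

definition rho_pm :: "real \<Rightarrow> bool \<Rightarrow> real" where
  "rho_pm r x = (if x then r else 1 - r)"

definition cube :: "nat \<Rightarrow> (nat \<Rightarrow> bool) set" where
  "cube k = PiE {1..k} (\<lambda>_. UNIV)"

definition theta :: "nat \<Rightarrow> real \<Rightarrow> (nat \<Rightarrow> bool) \<Rightarrow> (nat \<Rightarrow> bool) \<Rightarrow> real" where
  "theta k \<beta> L x = (1 - exp (-\<beta>)) *
     ((\<Prod>i\<in>{1..k}. of_bool (L i \<noteq> x i)) + (\<Prod>i\<in>{1..k}. of_bool (L i = x i)))"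

text \<open>u_{a,L}(x); the samples are rho :: nat \<times> nat \<Rightarrow> real, rho (a,j) = rho_{a,j}(1).\<close>
definition u_aL :: "nat \<Rightarrow> real \<Rightarrow> (nat \<times> nat \<Rightarrow> real) \<Rightarrow> nat \<Rightarrow> (nat \<Rightarrow> bool) \<Rightarrow> bool \<Rightarrow> real" where
  "u_aL k \<beta> \<rho> a L x = (\<Sum>xs\<in>cube k. of_bool (xs 1 = x) * (1 - theta k \<beta> L xs) *
       (\<Prod>j\<in>{2..k}. rho_pm (\<rho> (a, j)) (xs j)))"

definition u_L :: "nat \<Rightarrow> real \<Rightarrow> (nat \<times> nat \<Rightarrow> real) \<Rightarrow> (nat \<Rightarrow> bool) \<Rightarrow> real" where
  "u_L k \<beta> \<rho> L = (\<Sum>xs\<in>cube k. (1 - theta k \<beta> L xs) *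
       (\<Prod>j\<in>{1..k}. rho_pm (\<rho> (0, j)) (xs j)))"

definition samples :: "nat \<Rightarrow> nat \<Rightarrow> real measure \<Rightarrow> (nat \<times> nat \<Rightarrow> real) measure" where
  "samples k d \<eta>0 = PiM ({0..d} \<times> {1..k}) (\<lambda>_. \<eta>0)"

definition Pfun :: "nat \<Rightarrow> nat \<Rightarrow> real \<Rightarrow> real \<Rightarrow> real measure \<Rightarrow> (nat \<Rightarrow> nat \<Rightarrow> bool) \<Rightarrow> real" where
  "Pfun k d \<beta> lam \<eta>0 L =
     ln (\<integral>\<rho>. (\<Sum>x\<in>UNIV. \<Prod>a\<in>{1..d}. u_aL k \<beta> \<rho> a (L a) x) powr lam \<partial>samples k d \<eta>0) / lam
     - real (k - 1) * (real d / real k) / lam *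
       ln (\<integral>\<rho>. (u_L k \<beta> \<rho> (L 0)) powr lam \<partial>samples k d \<eta>0)"

end

theory Submission
  imports Defs
begin


lemma distr_flip:
  fixes \<eta>0 :: "real measure" and F :: "'i \<Rightarrow> bool"
  assumes P: "prob_space \<eta>0" and S: "sets \<eta>0 = sets borel"
    and D: "distr \<eta>0 borel (\<lambda>x. 1 - x) = \<eta>0" and fin: "finite I"
  shows "distr (PiM I (\<lambda>_. \<eta>0)) (PiM I (\<lambda>_. \<eta>0)) (\<lambda>\<rho>. \<lambda>i\<in>I. if F i then 1 - \<rho> i else \<rho> i)
     = PiM I (\<lambda>_. \<eta>0)"
proof -
  interpret M: product_prob_space "\<lambda>_. \<eta>0"
    by (intro product_prob_spaceI) (rule P)
  interpret pe: prob_space \<eta>0 by (rule P)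
  define g where "g i = (if F i then (\<lambda>x::real. 1 - x) else (\<lambda>x. x))" for i
  have gm[measurable]: "g i \<in> measurable \<eta>0 \<eta>0" for i
    unfolding g_def using measurable_cong_sets[OF S S] by auto
  have D2: "distr \<eta>0 \<eta>0 (\<lambda>x. 1 - x) = \<eta>0"
    using D by (metis S distr_cong)
  have gd: "distr \<eta>0 \<eta>0 (g i) = \<eta>0" for i
    unfolding g_def using D2 by (auto simp: distr_id2)
  have Teq: "(\<lambda>\<rho>. \<lambda>i\<in>I. if F i then 1 - \<rho> i else \<rho> i) = (\<lambda>\<rho>. \<lambda>i\<in>I. g i (\<rho> i))"
    by (auto simp: g_def fun_eq_iff)
  have Tm: "(\<lambda>\<rho>. \<lambda>i\<in>I. g i (\<rho> i)) \<in> measurable (PiM I (\<lambda>_. \<eta>0)) (PiM I (\<lambda>_. \<eta>0))"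
    by measurable
  show ?thesis unfolding Teq
  proof (rule M.PiM_eqI[OF fin])
    show "sets (distr (PiM I (\<lambda>_. \<eta>0)) (PiM I (\<lambda>_. \<eta>0)) (\<lambda>\<rho>. \<lambda>i\<in>I. g i (\<rho> i))) = sets (PiM I (\<lambda>_. \<eta>0))"
      by simp
    fix A assume A: "\<And>i. i \<in> I \<Longrightarrow> A i \<in> sets \<eta>0"
    have "emeasure (distr (PiM I (\<lambda>_. \<eta>0)) (PiM I (\<lambda>_. \<eta>0)) (\<lambda>\<rho>. \<lambda>i\<in>I. g i (\<rho> i))) (PiE I A)
        = emeasure (PiM I (\<lambda>_. \<eta>0)) ((\<lambda>\<rho>. \<lambda>i\<in>I. g i (\<rho> i)) -` PiE I A \<inter> space (PiM I (\<lambda>_. \<eta>0)))"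
      using A Tm by (intro emeasure_distr) (auto intro: sets_PiM_I_finite fin)
    also have "(\<lambda>\<rho>. \<lambda>i\<in>I. g i (\<rho> i)) -` PiE I A \<inter> space (PiM I (\<lambda>_. \<eta>0))
        = PiE I (\<lambda>i. g i -` A i \<inter> space \<eta>0)"
      by (auto simp: space_PiM PiE_def Pi_def extensional_def)
    also have "emeasure (PiM I (\<lambda>_. \<eta>0)) (PiE I (\<lambda>i. g i -` A i \<inter> space \<eta>0))
        = (\<Prod>i\<in>I. emeasure \<eta>0 (g i -` A i \<inter> space \<eta>0))"
      using A by (intro M.emeasure_PiM fin) (auto intro: measurable_sets gm)
    also have "\<dots> = (\<Prod>i\<in>I. emeasure (distr \<eta>0 \<eta>0 (g i)) (A i))"
      using A by (intro prod.cong emeasure_distr [symmetric]) auto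
    also have "\<dots> = (\<Prod>i\<in>I. emeasure \<eta>0 (A i))"
      by (simp add: gd)
    finally show "emeasure (distr (PiM I (\<lambda>_. \<eta>0)) (PiM I (\<lambda>_. \<eta>0)) (\<lambda>\<rho>. \<lambda>i\<in>I. g i (\<rho> i))) (PiE I A)
        = (\<Prod>i\<in>I. emeasure \<eta>0 (A i))" .
  qed
qed



lemma cube_flip:
  fixes k :: nat and M :: "nat \<Rightarrow> bool"
  defines "\<phi> \<equiv> (\<lambda>xs. \<lambda>i\<in>{1..k}. xs i \<noteq> M i)"
  shows "xs \<in> cube k \<Longrightarrow> \<phi> (\<phi> xs) = xs" and "xs \<in> cube k \<Longrightarrow> \<phi> xs \<in> cube k"
  by (auto simp: \<phi>_def cube_def PiE_def extensional_def fun_eq_iff)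

lemma theta_flip:
  assumes "xs \<in> cube k"
  shows "theta k \<beta> (\<lambda>_. False) (\<lambda>i\<in>{1..k}. xs i \<noteq> (L i \<noteq> c)) = theta k \<beta> L xs"
proof (cases c)
  case True
  have 1: "(\<Prod>i\<in>{1..k}. of_bool (False \<noteq> (\<lambda>i\<in>{1..k}. xs i \<noteq> (L i \<noteq> c)) i) :: real) = (\<Prod>i\<in>{1..k}. of_bool (L i = xs i))"
    using True by (intro prod.cong) auto
  have 2: "(\<Prod>i\<in>{1..k}. of_bool (False = (\<lambda>i\<in>{1..k}. xs i \<noteq> (L i \<noteq> c)) i) :: real) = (\<Prod>i\<in>{1..k}. of_bool (L i \<noteq> xs i))"
    using True by (intro prod.cong) auto
  show ?thesis unfolding theta_def 1 2 by simp
next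
  case False
  have 1: "(\<Prod>i\<in>{1..k}. of_bool (False \<noteq> (\<lambda>i\<in>{1..k}. xs i \<noteq> (L i \<noteq> c)) i) :: real) = (\<Prod>i\<in>{1..k}. of_bool (L i \<noteq> xs i))"
    using False by (intro prod.cong) auto
  have 2: "(\<Prod>i\<in>{1..k}. of_bool (False = (\<lambda>i\<in>{1..k}. xs i \<noteq> (L i \<noteq> c)) i) :: real) = (\<Prod>i\<in>{1..k}. of_bool (L i = xs i))"
    using False by (intro prod.cong) auto
  show ?thesis unfolding theta_def 1 2 by simp
qed

lemma u_aL_flip:
  assumes k: "k \<ge> 1" and r: "\<And>j. j \<in> {2..k} \<Longrightarrow> \<rho>' (a,j) = (if L j \<noteq> L 1 then 1 - \<rho> (a,j) else \<rho> (a,j))"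
  shows "u_aL k \<beta> \<rho> a L x = u_aL k \<beta> \<rho>' a (\<lambda>_. False) x"
  unfolding u_aL_def
proof (rule sum.reindex_bij_witness[where i="\<lambda>xs. \<lambda>i\<in>{1..k}. xs i \<noteq> (L i \<noteq> L 1)" and j="\<lambda>xs. \<lambda>i\<in>{1..k}. xs i \<noteq> (L i \<noteq> L 1)"])
  fix xs assume xs: "xs \<in> cube k"
  show "(\<lambda>i\<in>{1..k}. (\<lambda>i\<in>{1..k}. xs i \<noteq> (L i \<noteq> L 1)) i \<noteq> (L i \<noteq> L 1)) = xs"
    using xs by (auto simp: cube_def PiE_def extensional_def fun_eq_iff)
  show "(\<lambda>i\<in>{1..k}. xs i \<noteq> (L i \<noteq> L 1)) \<in> cube k"
    using xs by (auto simp: cube_def PiE_def extensional_def fun_eq_iff)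
  show "(\<lambda>i\<in>{1..k}. xs i \<noteq> (L i \<noteq> L 1)) \<in> cube k"
    using xs by (auto simp: cube_def PiE_def extensional_def fun_eq_iff)
  show "(\<lambda>i\<in>{1..k}. (\<lambda>i\<in>{1..k}. xs i \<noteq> (L i \<noteq> L 1)) i \<noteq> (L i \<noteq> L 1)) = xs"
    using xs by (auto simp: cube_def PiE_def extensional_def fun_eq_iff)
  have p: "(\<Prod>j\<in>{2..k}. rho_pm (\<rho>' (a, j)) ((\<lambda>i\<in>{1..k}. xs i \<noteq> (L i \<noteq> L 1)) j))
      = (\<Prod>j\<in>{2..k}. rho_pm (\<rho> (a, j)) (xs j))"
    using r by (intro prod.cong) (auto simp: rho_pm_def)
  show "of_bool ((\<lambda>i\<in>{1..k}. xs i \<noteq> (L i \<noteq> L 1)) 1 = x) * (1 - theta k \<beta> (\<lambda>_. False) (\<lambda>i\<in>{1..k}. xs i \<noteq> (L i \<noteq> L 1))) *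
         (\<Prod>j\<in>{2..k}. rho_pm (\<rho>' (a, j)) ((\<lambda>i\<in>{1..k}. xs i \<noteq> (L i \<noteq> L 1)) j)) =
        of_bool (xs 1 = x) * (1 - theta k \<beta> L xs) * (\<Prod>j\<in>{2..k}. rho_pm (\<rho> (a, j)) (xs j))"
    unfolding p theta_flip[OF xs] using k by simp
qed

lemma u_L_flip:
  assumes r: "\<And>j. j \<in> {1..k} \<Longrightarrow> \<rho>' (0,j) = (if L j then 1 - \<rho> (0,j) else \<rho> (0,j))"
  shows "u_L k \<beta> \<rho> L = u_L k \<beta> \<rho>' (\<lambda>_. False)"
  unfolding u_L_def
proof (rule sum.reindex_bij_witness[where i="\<lambda>xs. \<lambda>i\<in>{1..k}. xs i \<noteq> (L i \<noteq> False)" and j="\<lambda>xs. \<lambda>i\<in>{1..k}. xs i \<noteq> (L i \<noteq> False)"])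
  fix xs assume xs: "xs \<in> cube k"
  show "(\<lambda>i\<in>{1..k}. (\<lambda>i\<in>{1..k}. xs i \<noteq> (L i \<noteq> False)) i \<noteq> (L i \<noteq> False)) = xs"
    using xs by (auto simp: cube_def PiE_def extensional_def fun_eq_iff)
  show "(\<lambda>i\<in>{1..k}. xs i \<noteq> (L i \<noteq> False)) \<in> cube k"
    using xs by (auto simp: cube_def PiE_def extensional_def fun_eq_iff)
  show "(\<lambda>i\<in>{1..k}. xs i \<noteq> (L i \<noteq> False)) \<in> cube k"
    using xs by (auto simp: cube_def PiE_def extensional_def fun_eq_iff)
  show "(\<lambda>i\<in>{1..k}. (\<lambda>i\<in>{1..k}. xs i \<noteq> (L i \<noteq> False)) i \<noteq> (L i \<noteq> False)) = xs"
    using xs by (auto simp: cube_def PiE_def extensional_def fun_eq_iff)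
  have p: "(\<Prod>j\<in>{1..k}. rho_pm (\<rho>' (0, j)) ((\<lambda>i\<in>{1..k}. xs i \<noteq> (L i \<noteq> False)) j))
      = (\<Prod>j\<in>{1..k}. rho_pm (\<rho> (0, j)) (xs j))"
    using r by (intro prod.cong) (auto simp: rho_pm_def)
  show "(1 - theta k \<beta> (\<lambda>_. False) (\<lambda>i\<in>{1..k}. xs i \<noteq> (L i \<noteq> False))) *
         (\<Prod>j\<in>{1..k}. rho_pm (\<rho>' (0, j)) ((\<lambda>i\<in>{1..k}. xs i \<noteq> (L i \<noteq> False)) j)) =
        (1 - theta k \<beta> L xs) * (\<Prod>j\<in>{1..k}. rho_pm (\<rho> (0, j)) (xs j))"
    unfolding p theta_flip[OF xs] by simp
qed

lemma compm:
  fixes \<eta>0 :: "real measure"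
  assumes S: "sets \<eta>0 = sets borel" and "i \<in> I"
  shows "(\<lambda>x. x i) \<in> borel_measurable (PiM I (\<lambda>_. \<eta>0))"
  using measurable_component_singleton[OF assms(2), of "\<lambda>_. \<eta>0"] measurable_cong_sets[OF refl S]
  by metis

lemma compm2:
  fixes \<eta>0 :: "real measure"
  assumes S: "sets \<eta>0 = sets borel" and "i \<in> I"
  shows "(\<lambda>x. if c then x i else 1 - x i) \<in> borel_measurable (PiM I (\<lambda>_. \<eta>0))"
proof (cases c)
  case True thus ?thesis using compm[OF assms] by simp
next
  case False
  have "(\<lambda>x. 1 - x i) \<in> borel_measurable (PiM I (\<lambda>_. \<eta>0))"
    using compm[OF assms] by (rule borel_measurable_diff[OF borel_measurable_const])
  thus ?thesis using False by simp
qed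

lemma meas1: assumes S: "sets \<eta>0 = sets borel"
  shows "(\<lambda>\<rho>. (\<Sum>x\<in>UNIV. \<Prod>a\<in>{1..d}. u_aL k \<beta> \<rho> a (\<lambda>_. False) x) powr lam) \<in> borel_measurable (samples k d \<eta>0)"
  unfolding samples_def u_aL_def rho_pm_def
  apply (intro powr_real_measurable borel_measurable_sum borel_measurable_prod borel_measurable_times borel_measurable_const borel_measurable_diff borel_measurable_if_I)
  apply (auto intro!: compm2[OF S])
  done

lemma meas2: assumes S: "sets \<eta>0 = sets borel"
  shows "(\<lambda>\<rho>. (u_L k \<beta> \<rho> (\<lambda>_. False)) powr lam) \<in> borel_measurable (samples k d \<eta>0)"
  unfolding samples_def u_L_def rho_pm_def
  apply (intro powr_real_measurable borel_measurable_sum borel_measurable_prod borel_measurable_times borel_measurable_const borel_measurable_diff borel_measurable_if_I)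
  apply (auto intro!: compm2[OF S])
  done



lemma flip_meas:
  fixes \<eta>0 :: "real measure"
  assumes S: "sets \<eta>0 = sets borel"
  shows "(\<lambda>\<rho>. \<lambda>i\<in>I. if F i then 1 - \<rho> i else \<rho> i) \<in> measurable (PiM I (\<lambda>_. \<eta>0)) (PiM I (\<lambda>_. \<eta>0))"
proof -
  define g where "g i = (if F i then (\<lambda>x::real. 1 - x) else (\<lambda>x. x))" for i
  have gm[measurable]: "g i \<in> measurable \<eta>0 \<eta>0" for i
    unfolding g_def using measurable_cong_sets[OF S S] by auto
  have Teq: "(\<lambda>\<rho>. \<lambda>i\<in>I. if F i then 1 - \<rho> i else \<rho> i) = (\<lambda>\<rho>. \<lambda>i\<in>I. g i (\<rho> i))"
    by (auto simp: g_def fun_eq_iff)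
  show ?thesis unfolding Teq by measurable
qed

lemma integral_flip:
  fixes \<eta>0 :: "real measure" and g :: "('i \<Rightarrow> real) \<Rightarrow> real"
  assumes P: "prob_space \<eta>0" and S: "sets \<eta>0 = sets borel"
    and D: "distr \<eta>0 borel (\<lambda>x. 1 - x) = \<eta>0" and fin: "finite I"
    and g: "g \<in> borel_measurable (PiM I (\<lambda>_. \<eta>0))"
  shows "(\<integral>\<rho>. g (\<lambda>i\<in>I. if F i then 1 - \<rho> i else \<rho> i) \<partial>PiM I (\<lambda>_. \<eta>0)) = integral\<^sup>L (PiM I (\<lambda>_. \<eta>0)) g"
  using integral_distr[OF flip_meas[OF S] g, symmetric] distr_flip[OF P S D fin] by simp

theorem lemma2p3:
  fixes k d :: nat and \<beta> lam :: real and \<eta>0 :: "real measure"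
  assumes "k \<ge> 3" and "d \<ge> 1" and "\<beta> > 0" and "0 < lam" and "lam < 1"
    and "prob_space \<eta>0" and "sets \<eta>0 = sets borel" and "measure \<eta>0 {0..1} = 1"
    and "distr \<eta>0 borel (\<lambda>x. 1 - x) = \<eta>0"
  shows "(\<forall>L L'. Pfun k d \<beta> lam \<eta>0 L = Pfun k d \<beta> lam \<eta>0 L') \<and>
         (\<Sum>L\<in>PiE {0..d} (\<lambda>_. cube k). Pfun k d \<beta> lam \<eta>0 L) / 2 ^ (k * (d + 1))
           = Pfun k d \<beta> lam \<eta>0 (\<lambda>a i. False)"
proof -
  note P = assms(6) and S = assms(7) and D = assms(9)
  define I where "I = {0..d} \<times> {1..k}"
  have fin: "finite I" unfolding I_def by simp
  have k1: "k \<ge> 1" using assms(1) by simp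
  have key: "Pfun k d \<beta> lam \<eta>0 L = Pfun k d \<beta> lam \<eta>0 (\<lambda>a i. False)" for L
  proof -
    define T1 where "T1 = (\<lambda>\<rho>::nat\<times>nat\<Rightarrow>real. \<lambda>i\<in>I. if (L (fst i) (snd i) \<noteq> L (fst i) 1) then 1 - \<rho> i else \<rho> i)"
    define T2 where "T2 = (\<lambda>\<rho>::nat\<times>nat\<Rightarrow>real. \<lambda>i\<in>I. if L 0 (snd i) then 1 - \<rho> i else \<rho> i)"
    have e1: "(\<Sum>x\<in>UNIV. \<Prod>a\<in>{1..d}. u_aL k \<beta> \<rho> a (L a) x) = (\<Sum>x\<in>UNIV. \<Prod>a\<in>{1..d}. u_aL k \<beta> (T1 \<rho>) a (\<lambda>_. False) x)" for \<rho>
      by (intro sum.cong prod.cong refl u_aL_flip[OF k1]) (auto simp: T1_def I_def)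
    have e2: "u_L k \<beta> \<rho> (L 0) = u_L k \<beta> (T2 \<rho>) (\<lambda>_. False)" for \<rho>
      by (intro u_L_flip) (auto simp: T2_def I_def)
    have i1: "(\<integral>\<rho>. (\<Sum>x\<in>UNIV. \<Prod>a\<in>{1..d}. u_aL k \<beta> \<rho> a (L a) x) powr lam \<partial>samples k d \<eta>0)
        = (\<integral>\<rho>. (\<Sum>x\<in>UNIV. \<Prod>a\<in>{1..d}. u_aL k \<beta> \<rho> a (\<lambda>_. False) x) powr lam \<partial>samples k d \<eta>0)"
      unfolding e1 T1_def samples_def I_def[symmetric]
      by (rule integral_flip[OF P S D fin meas1[OF S, where d=d and k=k and \<beta>=\<beta> and lam=lam, unfolded samples_def I_def[symmetric]]])
    have i2: "(\<integral>\<rho>. (u_L k \<beta> \<rho> (L 0)) powr lam \<partial>samples k d \<eta>0)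
        = (\<integral>\<rho>. (u_L k \<beta> \<rho> (\<lambda>_. False)) powr lam \<partial>samples k d \<eta>0)"
      unfolding e2 T2_def samples_def I_def[symmetric]
      by (rule integral_flip[OF P S D fin meas2[OF S, where d=d and k=k and \<beta>=\<beta> and lam=lam, unfolded samples_def I_def[symmetric]]])
    show ?thesis unfolding Pfun_def i1 i2 by simp
  qed
  have cc: "card (cube k) = 2 ^ k" unfolding cube_def by (simp add: card_PiE)
  have card: "card (PiE {0..d} (\<lambda>_. cube k)) = 2 ^ (k * (d + 1))"
  proof -
    have "card (PiE {0..d} (\<lambda>_. cube k)) = (2 ^ k) ^ card {0..d}"
      by (simp add: card_PiE cc)
    also have "\<dots> = (2 ^ k) ^ (d + 1)" by simp
    also have "\<dots> = 2 ^ (k * (d + 1))" by (simp only: power_mult)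
    finally show ?thesis .
  qed
  have "(\<Sum>L\<in>PiE {0..d} (\<lambda>_. cube k). Pfun k d \<beta> lam \<eta>0 L) = 2 ^ (k * (d + 1)) * Pfun k d \<beta> lam \<eta>0 (\<lambda>a i. False)"
  proof -
    have "(\<Sum>L\<in>PiE {0..d} (\<lambda>_. cube k). Pfun k d \<beta> lam \<eta>0 L) = (\<Sum>L\<in>PiE {0..d} (\<lambda>_. cube k). Pfun k d \<beta> lam \<eta>0 (\<lambda>a i. False))"
      by (rule sum.cong[OF refl key])
    also have "\<dots> = real (card (PiE {0..d} (\<lambda>_. cube k))) * Pfun k d \<beta> lam \<eta>0 (\<lambda>a i. False)"
      by (rule sum_constant)
    finally show ?thesis unfolding card by simp
  qed
  moreover have "\<forall>L L'. Pfun k d \<beta> lam \<eta>0 L = Pfun k d \<beta> lam \<eta>0 L'"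
    using key by metis
  ultimately show ?thesis by simp
qed

end
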